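(* Let $m=2k+1$ with $k$ a nonnegative integer and let $n$ be an integer with $0\le n<m-1$. Let $M(u)=M(u^2+u^{2m})$, $u\in(0,+\infty)$, where $M(h)$ is the first order Melnikov function of $(1.1)_\epsilon$. Then $M(u)$ is a linear combination of the following $\left[\frac{n-1}{2}\right]+\left[\frac{n}{2}\right]^2+3\left[\frac{n}{2}\right]+3$ linearly independent functions on $(0,+\infty)$: $$u^{2p+1}\ (0\le p\le [n/2]);\qquad u^{2p+(m-1)(k+1)+1}\ (0\le p\le [n/2],\ 0\le k\le 2p);\qquad (u^2+u^{2m})^{l+1}\ (0\le l\le [(n-1)/2]),$$ (i.e. $u,u^3,\dots,u^{2[n/2]+1},u^{m},u^{m+2},u^{2m+1},\dots,u^{2[n/2]m+m},u^2+u^{2m},\dots,(u^2+u^{2m})^{[(n-1)/2]+1}$), and the coefficients of this linear combination are independent, i.e. as the coefficients of $p^\pm,q^\pm$ range over all real values these coefficients take all real values.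
   Context: $[x]$ is the integer part. System $(1.1)_\epsilon$: $\dot x=y+\epsilon p^{+},\ \dot y=-x+\epsilon q^{+}$ for $y\ge x^{m}$, and $\dot x=y+\epsilon p^{-},\ \dot y=-x+\epsilon q^{-}$ for $y<x^{m}$, where $p^{\pm}=\sum_{i+j=0}^{n}a^{\pm}_{i,j}x^iy^j$, $q^{\pm}=\sum_{i+j=0}^{n}b^{\pm}_{i,j}x^iy^j$ are arbitrary real polynomials of degree $n$. For $h>0$, $u=u(h)>0$ solves $u^2+u^{2m}=h$; $L_h^{+}$ is the arc of $x^2+y^2=h$ in $\{y\ge x^m\}$ traversed clockwise from $(-u,(-u)^m)$ to $(u,u^m)$, and $L_h^-$ the arc in $\{y\le x^m\}$ traversed clockwise from $(u,u^m)$ to $(-u,(-u)^m)$. The first order Melnikov function is $M(h)=\int_{L_h^+}q^+dx-p^+dy+\int_{L_h^-}q^-dx-p^-dy$. *)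

theory Defs
  imports "HOL-Analysis.Analysis"
begin

definition poly2 :: "nat \<Rightarrow> (nat \<Rightarrow> nat \<Rightarrow> real) \<Rightarrow> real \<Rightarrow> real \<Rightarrow> real" where
  "poly2 n a x y = (\<Sum>i\<le>n. \<Sum>j\<le>n - i. a i j * x ^ i * y ^ j)"

definition line_int :: "(real \<Rightarrow> real \<Rightarrow> real) \<Rightarrow> (real \<Rightarrow> real \<Rightarrow> real)
    \<Rightarrow> (real \<Rightarrow> real \<times> real) \<Rightarrow> real \<Rightarrow> real \<Rightarrow> real" where
  "line_int Q P g s t = integral {s..t} (\<lambda>\<tau>.
      Q (fst (g \<tau>)) (snd (g \<tau>)) * fst (vector_derivative g (at \<tau>))
    - P (fst (g \<tau>)) (snd (g \<tau>)) * snd (vector_derivative g (at \<tau>)))"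

definition u_of :: "nat \<Rightarrow> real \<Rightarrow> real" where
  "u_of m h = (THE u. u > 0 \<and> u ^ 2 + u ^ (2 * m) = h)"

text \<open>Clockwise parametrisation of the circle x^2 + y^2 = h: theta = 0 at the top.\<close>
definition circ :: "real \<Rightarrow> real \<Rightarrow> real \<times> real" where
  "circ h \<theta> = (sqrt h * sin \<theta>, sqrt h * cos \<theta>)"

text \<open>Angle of the point (u, u^m) (first quadrant) in this parametrisation.\<close>
definition theta0 :: "nat \<Rightarrow> real \<Rightarrow> real" where
  "theta0 m h = arctan (u_of m h / u_of m h ^ m)"

text \<open>First order Melnikov function M(h): L_h^+ is circ h on [theta0 - pi, theta0]
  (from (-u,(-u)^m) clockwise to (u,u^m)), L_h^- is circ h on [theta0, theta0 + pi].
  ap, bp are the coefficients of p^+, q^+; am, bm those of p^-, q^-.\<close>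
definition melnikov :: "nat \<Rightarrow> nat \<Rightarrow> (nat \<Rightarrow> nat \<Rightarrow> real) \<Rightarrow> (nat \<Rightarrow> nat \<Rightarrow> real)
    \<Rightarrow> (nat \<Rightarrow> nat \<Rightarrow> real) \<Rightarrow> (nat \<Rightarrow> nat \<Rightarrow> real) \<Rightarrow> real \<Rightarrow> real" where
  "melnikov m n ap bp am bm h =
     line_int (poly2 n bp) (poly2 n ap) (circ h) (theta0 m h - pi) (theta0 m h)
   + line_int (poly2 n bm) (poly2 n am) (circ h) (theta0 m h) (theta0 m h + pi)"

definition Lset :: "nat \<Rightarrow> nat set" where
  "Lset n = {l. int l \<le> \<lfloor>(real n - 1) / 2\<rfloor>}"

definition comb :: "nat \<Rightarrow> nat \<Rightarrow> (nat \<Rightarrow> real) \<Rightarrow> (nat \<Rightarrow> nat \<Rightarrow> real) \<Rightarrow> (nat \<Rightarrow> real)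
    \<Rightarrow> real \<Rightarrow> real" where
  "comb m n cA cB cC u =
     (\<Sum>p\<le>n div 2. cA p * u ^ (2 * p + 1))
   + (\<Sum>p\<le>n div 2. \<Sum>k\<le>2 * p. cB p k * u ^ (2 * p + (m - 1) * (k + 1) + 1))
   + (\<Sum>l\<in>Lset n. cC l * (u ^ 2 + u ^ (2 * m)) ^ (l + 1))"

end

theory Submission
  imports Defs "HOL-Computational_Algebra.Polynomial"
begin

inductive_set Hom :: "nat \<Rightarrow> (real \<Rightarrow> real) set" for d :: nat where
  Hzero: "(\<lambda>x. 0) \<in> Hom d"
| Hmono: "d = i + j \<Longrightarrow> (\<lambda>x. sin x ^ i * cos x ^ j) \<in> Hom d"
| Hadd: "f \<in> Hom d \<Longrightarrow> g \<in> Hom d \<Longrightarrow> (\<lambda>x. f x + g x) \<in> Hom d"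
| Hscale: "f \<in> Hom d \<Longrightarrow> (\<lambda>x. c * f x) \<in> Hom d"


lemma Hom_shift:
  assumes "f \<in> Hom d"
  shows "f (x + pi) = (-1) ^ d * f x \<and> f (x - pi) = (-1) ^ d * f x"
  using assms
proof induction
  case Hzero
  then show ?case by simp
next
  case (Hmono i j)
  have e: "(- sin x) ^ i * (- cos x) ^ j = (-1) ^ (i + j) * (sin x ^ i * cos x ^ j)"
    by (simp only: power_minus[of "sin x"] power_minus[of "cos x"] power_add mult_ac)
  have s: "sin (x+pi) = - sin x" "cos(x+pi) = - cos x" "sin (x - pi) = - sin x" "cos (x-pi) = - cos x"
    by simp_all
  show ?case using Hmono by (simp only: s e)
next
  case (Hadd f g)
  then show ?case by (simp add: distrib_left)
next
  case (Hscale f c)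
  then show ?case by simp
qed
lemma pow_lift: "(s::real) ^ i * c ^ j * (s ^ 2 + c ^ 2) = s ^ (i+2) * c ^ j + s ^ i * c ^ (j+2)"
  by (simp add: power_add power2_eq_square algebra_simps)

lemma Hdiv: "f \<in> Hom d \<Longrightarrow> (\<lambda>x. f x / r) \<in> Hom d"
  using Hom.Hscale[of f d "inverse r"] by (simp add: divide_inverse mult.commute)

lemma Hneg: "f \<in> Hom d \<Longrightarrow> (\<lambda>x. - f x) \<in> Hom d"
  using Hom.Hscale[of f d "-1"] by simp

lemma Hom_lift:
  assumes "f \<in> Hom d"
  shows "f \<in> Hom (d + 2)"
  using assms
proof induction
  case (Hmono i j)
  have e0: "sin x ^ i * cos x ^ j = sin x ^ (i+2) * cos x ^ j + sin x ^ i * cos x ^ (j+2)" for x :: real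
  proof -
    have "sin x ^ i * cos x ^ j = sin x ^ i * cos x ^ j * (sin x ^ 2 + cos x ^ 2)" by (simp only: sin_cos_squared_add mult_1_right)
    also have "\<dots> = sin x ^ (i+2) * cos x ^ j + sin x ^ i * cos x ^ (j+2)"
      by (rule pow_lift)
    finally show ?thesis .
  qed
  have e: "(\<lambda>x::real. sin x ^ i * cos x ^ j) = (\<lambda>x. sin x ^ (i+2) * cos x ^ j + sin x ^ i * cos x ^ (j+2))"
    by (rule ext) (rule e0)
  show ?case unfolding e using Hmono by (intro Hom.Hadd Hom.Hmono) auto
qed (auto intro: Hom.intros)

definition Tprop :: "nat \<Rightarrow> nat \<Rightarrow> (real \<Rightarrow> real) \<Rightarrow> real \<Rightarrow> bool" where
  "Tprop a b F c \<longleftrightarrow> F \<in> Hom (a + b) \<and>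
     (\<forall>x. (F has_real_derivative (sin x ^ a * cos x ^ b - c)) (at x)) \<and>
     (odd (a + b) \<longrightarrow> c = 0) \<and> (even a \<and> even b \<longrightarrow> c > 0)"

lemma deriv_sc:
  "((\<lambda>x. sin x ^ (a+1) * cos x ^ (b+1)) has_real_derivative
     (real (a+1) * sin x ^ a * cos x ^ (b+2) - real (b+1) * sin x ^ (a+2) * cos x ^ b)) (at x)"
  by (rule derivative_eq_intros refl)+ (simp add: power_add algebra_simps)


lemma fin_b:
  fixes r A B P Q c Fx X :: real
  assumes "r \<noteq> 0" "r = A + B"
  shows "((A*Q + -B*(P-Q) + (0*Fx + (P-c)*B))*r - X*0)/(r*r) = Q - B*c/r"
proof -
  have n: "A*Q + -B*(P-Q) + (0*Fx + (P-c)*B) = r*Q - B*c" using assms(2) by (simp add: algebra_simps)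
  show ?thesis unfolding n using assms(1) by (simp add: field_simps)
qed

lemma fin_a:
  fixes r A B P Q c Fx X :: real
  assumes "r \<noteq> 0" "r = A + B"
  shows "((0*Fx + (P-c)*A - (A*Q + -B*(P-Q)))*r - X*0)/(r*r) = (P - Q) - A*c/r"
proof -
  have n: "0*Fx + (P-c)*A - (A*Q + -B*(P-Q)) = r*(P - Q) - A*c" using assms(2) by (simp add: algebra_simps)
  show ?thesis unfolding n using assms(1) by (simp add: field_simps)
qed

lemma alg_b:
  fixes s co c Fx :: real
  assumes sc: "s^2 + co^2 = 1"
  shows "((real (a + 1) * (co * 1 * s ^ (a + 1 - Suc 0)) * co ^ (b + 1) +
       real (b + 1) * (- s * 1 * co ^ (b + 1 - Suc 0)) * s ^ (a + 1) +
       (0 * Fx + (s ^ a * co ^ b - c) * real (b + 1))) * real (a + b + 2) -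
      (s ^ (a + 1) * co ^ (b + 1) + real (b + 1) * Fx) * 0) /
     (real (a + b + 2) * real (a + b + 2)) =
     s ^ a * co ^ (b + 2) - real (b + 1) * c / real (a + b + 2)"
proof -
  define P where "P = s^a * co^b"
  define Q where "Q = s^a * co^(b+2)"
  have e1: "co * 1 * s^(a+1-Suc 0) * co^(b+1) = Q"
    unfolding Q_def by (simp add: power_add power2_eq_square algebra_simps)
  have s2: "s^2 = 1 - co^2" using sc by simp
  have "s * co^(b+1-Suc 0) * s^(a+1) = P * s^2"
    unfolding P_def by (simp add: power_add power2_eq_square algebra_simps)
  also have "\<dots> = P - Q" unfolding s2 P_def Q_def by (simp add: power_add power2_eq_square algebra_simps)
  finally have e2: "s * co^(b+1-Suc 0) * s^(a+1) = P - Q" .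
  have R: "real (a + b + 2) > 0" by simp
  have h1: "real (a + 1) * (co * 1 * s ^ (a + 1 - Suc 0)) * co ^ (b + 1) = real (a+1) * Q"
    using e1 by (simp add: mult.assoc)
  have h2: "real (b + 1) * (- s * 1 * co ^ (b + 1 - Suc 0)) * s ^ (a + 1) = - real (b+1) * (P - Q)"
    unfolding e2[symmetric] by (simp add: algebra_simps)
  show ?thesis unfolding h1 h2 P_def[symmetric] Q_def[symmetric]
    by (rule fin_b) simp_all
qed

lemma alg_a:
  fixes s co c Fx :: real
  assumes sc: "s^2 + co^2 = 1"
  shows "((0 * Fx + (s ^ a * co ^ b - c) * real (a + 1) -
       (real (a + 1) * (co * 1 * s ^ (a + 1 - Suc 0)) * co ^ (b + 1) +
        real (b + 1) * (- s * 1 * co ^ (b + 1 - Suc 0)) * s ^ (a + 1))) *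
      real (a + b + 2) -
      (real (a + 1) * Fx - s ^ (a + 1) * co ^ (b + 1)) * 0) /
     (real (a + b + 2) * real (a + b + 2)) =
     s ^ (a + 2) * co ^ b - real (a + 1) * c / real (a + b + 2)"
proof -
  define P where "P = s^a * co^b"
  define Q where "Q = s^a * co^(b+2)"
  have e1: "co * 1 * s^(a+1-Suc 0) * co^(b+1) = Q"
    unfolding Q_def by (simp add: power_add power2_eq_square algebra_simps)
  have s2: "s^2 = 1 - co^2" using sc by simp
  have "s * co^(b+1-Suc 0) * s^(a+1) = P * s^2"
    unfolding P_def by (simp add: power_add power2_eq_square algebra_simps)
  also have "\<dots> = P - Q" unfolding s2 P_def Q_def by (simp add: power_add power2_eq_square algebra_simps)
  finally have e2: "s * co^(b+1-Suc 0) * s^(a+1) = P - Q" .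
  have e3: "s ^ (a + 2) * co ^ b = P - Q"
    using e2 by (simp add: power_add power2_eq_square algebra_simps)
  have R: "real (a + b + 2) > 0" by simp
  have h1: "real (a + 1) * (co * 1 * s ^ (a + 1 - Suc 0)) * co ^ (b + 1) = real (a+1) * Q"
    using e1 by (simp add: mult.assoc)
  have h2: "real (b + 1) * (- s * 1 * co ^ (b + 1 - Suc 0)) * s ^ (a + 1) = - real (b+1) * (P - Q)"
    unfolding e2[symmetric] by (simp add: algebra_simps)
  show ?thesis unfolding h1 h2 e3 P_def[symmetric] Q_def[symmetric]
    by (rule fin_a) simp_all
qed

lemma T_step_b:
  assumes T: "Tprop a b F c"
  shows "Tprop a (b+2) (\<lambda>x. (sin x ^ (a+1) * cos x ^ (b+1) + real (b+1) * F x) / real (a+b+2))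
     (real (b+1) * c / real (a+b+2))"
  unfolding Tprop_def
proof (intro conjI allI impI)
  show "(\<lambda>x. (sin x ^ (a+1) * cos x ^ (b+1) + real (b+1) * F x) / real (a+b+2)) \<in> Hom (a + (b + 2))"
  proof -
    have "F \<in> Hom (a+(b+2))" using T Hom_lift unfolding Tprop_def by (auto simp: add.assoc)
    then show ?thesis by (intro Hdiv Hom.Hadd Hom.Hscale Hom.Hmono) auto
  qed
next
  fix x
  have dF: "(F has_real_derivative (sin x ^ a * cos x ^ b - c)) (at x)" using T unfolding Tprop_def by auto
  show "((\<lambda>x. (sin x ^ (a+1) * cos x ^ (b+1) + real (b+1) * F x) / real (a+b+2)) has_real_derivative
     sin x ^ a * cos x ^ (b + 2) - real (b + 1) * c / real (a + b + 2)) (at x)"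
    apply (rule derivative_eq_intros dF refl)+
     apply simp
    by (rule alg_b) simp
qed (use T in \<open>auto simp: Tprop_def\<close>)

lemma T_step_a:
  assumes T: "Tprop a b F c"
  shows "Tprop (a+2) b (\<lambda>x. (real (a+1) * F x - sin x ^ (a+1) * cos x ^ (b+1)) / real (a+b+2))
     (real (a+1) * c / real (a+b+2))"
  unfolding Tprop_def
proof (intro conjI allI impI)
  show "(\<lambda>x. (real (a+1) * F x - sin x ^ (a+1) * cos x ^ (b+1)) / real (a+b+2)) \<in> Hom (a + 2 + b)"
  proof -
    have "F \<in> Hom (a+2+b)" using T Hom_lift unfolding Tprop_def by (auto simp: add.commute add.left_commute)
    then show ?thesis unfolding diff_conv_add_uminus
      by (intro Hdiv Hom.Hadd Hom.Hscale Hom.Hmono Hneg) auto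
  qed
next
  fix x
  have dF: "(F has_real_derivative (sin x ^ a * cos x ^ b - c)) (at x)" using T unfolding Tprop_def by auto
  show "((\<lambda>x. (real (a+1) * F x - sin x ^ (a+1) * cos x ^ (b+1)) / real (a+b+2)) has_real_derivative
     sin x ^ (a+2) * cos x ^ b - real (a + 1) * c / real (a + b + 2)) (at x)"
    apply (rule derivative_eq_intros dF refl)+
     apply simp
    by (rule alg_a) simp
qed (use T in \<open>auto simp: Tprop_def\<close>)

lemma T_a0: "\<exists>F c. Tprop a 0 F c"
proof (induction a rule: nat_less_induct)
  case (1 a)
  consider "a = 0" | "a = 1" | a' where "a = a' + 2"
    by (metis One_nat_def add_2_eq_Suc' not0_implies_Suc)
  then show ?case
  proof cases
    case 1
    have "Tprop 0 0 (\<lambda>x. 0) 1" unfolding Tprop_def by (auto intro: Hom.intros)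
    then show ?thesis using 1 by blast
  next
    case 2
    have H: "(\<lambda>x::real. - (sin x ^ 0 * cos x ^ 1)) \<in> Hom (1+0)"
      by (rule Hneg, rule Hom.Hmono) simp
    have "Tprop 1 0 (\<lambda>x. - (sin x ^ 0 * cos x ^ 1)) 0" unfolding Tprop_def
      using H by (auto intro!: derivative_eq_intros)
    then show ?thesis using 2 by blast
  next
    case 3
    then have "a' < a" by simp
    then obtain F c where "Tprop a' 0 F c" using "1.IH" by blast
    from T_step_a[OF this] show ?thesis using 3 by blast
  qed
qed

lemma T_a1: "Tprop a 1 (\<lambda>x. inverse (real (a+1)) * (sin x ^ (a+1) * cos x ^ 0)) 0"
  unfolding Tprop_def
proof (intro conjI allI impI)
  show "(\<lambda>x. inverse (real (a+1)) * (sin x ^ (a+1) * cos x ^ 0)) \<in> Hom (a + 1)"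
    by (intro Hom.Hscale Hom.Hmono) simp
next
  fix x :: real
  show "((\<lambda>x. inverse (real (a+1)) * (sin x ^ (a+1) * cos x ^ 0)) has_real_derivative sin x ^ a * cos x ^ 1 - 0) (at x)"
    by (rule derivative_eq_intros refl)+ (simp add: field_simps)
qed simp_all

lemma T_all: "\<exists>F c. Tprop a b F c"
proof (induction b rule: nat_less_induct)
  case (1 b)
  consider "b = 0" | "b = 1" | b' where "b = b' + 2"
    by (metis One_nat_def add_2_eq_Suc' not0_implies_Suc)
  then show ?case
  proof cases
    case 1 then show ?thesis using T_a0 by simp
  next
    case 2 then show ?thesis using T_a1 by blast
  next
    case 3
    then have "b' < b" by simp
    then obtain F c where "Tprop a b' F c" using "1.IH" by blast
    from T_step_b[OF this] show ?thesis using 3 by blast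
  qed
qed

lemma T_integral:
  assumes T: "Tprop a b F c" and ab: "\<alpha> \<le> \<beta>"
  shows "integral {\<alpha>..\<beta>} (\<lambda>t. sin t ^ a * cos t ^ b) = F \<beta> - F \<alpha> + c * (\<beta> - \<alpha>)"
proof -
  have d: "((\<lambda>t. F t + c * t) has_real_derivative sin t ^ a * cos t ^ b) (at t)" for t
  proof -
    have "(F has_real_derivative (sin t ^ a * cos t ^ b - c)) (at t)" using T unfolding Tprop_def by auto
    from DERIV_add[OF this DERIV_cmult_Id[of c t UNIV]] show ?thesis by simp
  qed
  have "((\<lambda>t. sin t ^ a * cos t ^ b) has_integral ((F \<beta> + c * \<beta>) - (F \<alpha> + c * \<alpha>))) {\<alpha>..\<beta>}"
    by (rule fundamental_theorem_of_calculus[OF ab])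
       (use d in \<open>auto simp: has_real_derivative_iff_has_vector_derivative intro: has_vector_derivative_at_within\<close>)
  then show ?thesis by (simp add: integral_unique algebra_simps)
qed

lemma E_odd:
  assumes "odd (a + b)"
  shows "\<exists>F. F \<in> Hom (a+b) \<and> (\<forall>\<alpha>. integral {\<alpha>-pi..\<alpha>} (\<lambda>t. sin t ^ a * cos t ^ b) = 2 * F \<alpha>
     \<and> integral {\<alpha>..\<alpha>+pi} (\<lambda>t. sin t ^ a * cos t ^ b) = - 2 * F \<alpha>)"
proof -
  obtain F c where T: "Tprop a b F c" using T_all by blast
  have c0: "c = 0" and H: "F \<in> Hom (a+b)" using T assms unfolding Tprop_def by auto
  have sh: "F (\<alpha> + pi) = - F \<alpha>" "F (\<alpha> - pi) = - F \<alpha>" for \<alpha>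
    using Hom_shift[OF H, of \<alpha>] assms by auto
  show ?thesis
  proof (intro exI conjI allI)
    fix \<alpha> :: real
    show "integral {\<alpha>-pi..\<alpha>} (\<lambda>t. sin t ^ a * cos t ^ b) = 2 * F \<alpha>"
      using T_integral[OF T, of "\<alpha> - pi" \<alpha>] sh c0 by simp
    show "integral {\<alpha>..\<alpha>+pi} (\<lambda>t. sin t ^ a * cos t ^ b) = - 2 * F \<alpha>"
      using T_integral[OF T, of \<alpha> "\<alpha> + pi"] sh c0 by simp
  qed (rule H)
qed

lemma E_even:
  assumes "even (a + b)"
  shows "\<exists>c. (even a \<longrightarrow> c > 0) \<and> (\<forall>\<alpha>. integral {\<alpha>-pi..\<alpha>} (\<lambda>t. sin t ^ a * cos t ^ b) = c * pi
     \<and> integral {\<alpha>..\<alpha>+pi} (\<lambda>t. sin t ^ a * cos t ^ b) = c * pi)"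
proof -
  obtain F c where T: "Tprop a b F c" using T_all by blast
  have H: "F \<in> Hom (a+b)" using T unfolding Tprop_def by auto
  have cp: "even a \<longrightarrow> c > 0" using T assms unfolding Tprop_def by auto
  have sh: "F (\<alpha> + pi) = F \<alpha>" "F (\<alpha> - pi) = F \<alpha>" for \<alpha>
    using Hom_shift[OF H, of \<alpha>] assms by auto
  show ?thesis
  proof (intro exI conjI allI)
    fix \<alpha> :: real
    show "integral {\<alpha>-pi..\<alpha>} (\<lambda>t. sin t ^ a * cos t ^ b) = c * pi"
      using T_integral[OF T, of "\<alpha> - pi" \<alpha>] sh by simp
    show "integral {\<alpha>..\<alpha>+pi} (\<lambda>t. sin t ^ a * cos t ^ b) = c * pi"
      using T_integral[OF T, of \<alpha> "\<alpha> + pi"] sh by simp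
  qed (rule cp)
qed

lemma circ_vd: "vector_derivative (circ h) (at t) = (sqrt h * cos t, - (sqrt h * sin t))"
proof -
  have e: "circ h = (\<lambda>\<theta>. (sqrt h * sin \<theta>, sqrt h * cos \<theta>))" by (rule ext) (simp add: circ_def)
  have d1: "((\<lambda>\<theta>. sqrt h * sin \<theta>) has_vector_derivative (sqrt h * cos t)) (at t)"
    unfolding has_real_derivative_iff_has_vector_derivative[symmetric]
    by (rule derivative_eq_intros refl)+ simp
  have d2: "((\<lambda>\<theta>. sqrt h * cos \<theta>) has_vector_derivative (- (sqrt h * sin t))) (at t)"
    unfolding has_real_derivative_iff_has_vector_derivative[symmetric]
    by (rule derivative_eq_intros refl)+ simp
  show ?thesis unfolding e by (rule vector_derivative_at, rule has_vector_derivative_Pair[OF d1 d2])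
qed

lemma line_int_circ:
  "line_int (poly2 n b) (poly2 n a) (circ h) \<alpha> \<beta> =
   (\<Sum>i\<le>n. \<Sum>j\<le>n-i. sqrt h ^ (i+j+1) *
      (b i j * integral {\<alpha>..\<beta>} (\<lambda>t. sin t ^ i * cos t ^ (j+1))
     + a i j * integral {\<alpha>..\<beta>} (\<lambda>t. sin t ^ (i+1) * cos t ^ j)))"
proof -
  define r where "r = sqrt h"
  have tm: "b i j * (r * s) ^ i * (r * c) ^ j * (r * c) + a i j * (r * s) ^ i * (r * c) ^ j * (r * s)
     = r ^ (i+j+1) * (b i j * (s ^ i * c ^ (j+1)) + a i j * (s ^ (i+1) * c ^ j))" for i j and s c :: real
    by (simp add: power_mult_distrib power_add algebra_simps)
  have pt: "poly2 n b (fst (circ h t)) (snd (circ h t)) * fst (vector_derivative (circ h) (at t))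
      - poly2 n a (fst (circ h t)) (snd (circ h t)) * snd (vector_derivative (circ h) (at t))
    = (\<Sum>i\<le>n. \<Sum>j\<le>n-i. r ^ (i+j+1) * (b i j * (sin t ^ i * cos t ^ (j+1)) + a i j * (sin t ^ (i+1) * cos t ^ j)))"
    for t
  proof -
    have "poly2 n b (fst (circ h t)) (snd (circ h t)) * fst (vector_derivative (circ h) (at t))
      - poly2 n a (fst (circ h t)) (snd (circ h t)) * snd (vector_derivative (circ h) (at t))
      = (\<Sum>i\<le>n. \<Sum>j\<le>n-i. b i j * (r * sin t) ^ i * (r * cos t) ^ j * (r * cos t))
      + (\<Sum>i\<le>n. \<Sum>j\<le>n-i. a i j * (r * sin t) ^ i * (r * cos t) ^ j * (r * sin t))"
      unfolding circ_vd poly2_def r_def by (simp add: circ_def sum_distrib_right)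
    also have "\<dots> = (\<Sum>i\<le>n. \<Sum>j\<le>n-i. b i j * (r * sin t) ^ i * (r * cos t) ^ j * (r * cos t)
        + a i j * (r * sin t) ^ i * (r * cos t) ^ j * (r * sin t))"
      by (simp add: sum.distrib)
    also have "\<dots> = (\<Sum>i\<le>n. \<Sum>j\<le>n-i. r ^ (i+j+1) * (b i j * (sin t ^ i * cos t ^ (j+1)) + a i j * (sin t ^ (i+1) * cos t ^ j)))"
      by (simp only: tm)
    finally show ?thesis .
  qed
  have hi: "((\<lambda>t. \<Sum>i\<le>n. \<Sum>j\<le>n-i. r ^ (i+j+1) * (b i j * (sin t ^ i * cos t ^ (j+1)) + a i j * (sin t ^ (i+1) * cos t ^ j)))
     has_integral (\<Sum>i\<le>n. \<Sum>j\<le>n-i. r ^ (i+j+1) *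
      (b i j * integral {\<alpha>..\<beta>} (\<lambda>t. sin t ^ i * cos t ^ (j+1))
     + a i j * integral {\<alpha>..\<beta>} (\<lambda>t. sin t ^ (i+1) * cos t ^ j)))) {\<alpha>..\<beta>}"
    by (intro has_integral_sum ballI finite_atMost has_integral_mult_right has_integral_add
        integrable_integral integrable_continuous_real continuous_intros)
  show ?thesis unfolding line_int_def pt using hi r_def by (simp add: integral_unique)
qed

definition Ep :: "nat \<Rightarrow> real \<Rightarrow> nat \<Rightarrow> nat \<Rightarrow> real" where
  "Ep m h a b = integral {theta0 m h - pi..theta0 m h} (\<lambda>t. sin t ^ a * cos t ^ b)"
definition Em :: "nat \<Rightarrow> real \<Rightarrow> nat \<Rightarrow> nat \<Rightarrow> real" where
  "Em m h a b = integral {theta0 m h..theta0 m h + pi} (\<lambda>t. sin t ^ a * cos t ^ b)"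

lemma melnikov_expand:
  "melnikov m n ap bp am bm h =
   (\<Sum>i\<le>n. \<Sum>j\<le>n-i. sqrt h ^ (i+j+1) *
      (bp i j * Ep m h i (j+1) + ap i j * Ep m h (i+1) j + bm i j * Em m h i (j+1) + am i j * Em m h (i+1) j))"
  unfolding melnikov_def line_int_circ Ep_def Em_def
  by (simp add: sum.distrib[symmetric] algebra_simps)

lemma u_of_eq:
  assumes m: "m \<ge> 1" and u: "u > 0"
  shows "u_of m (u ^ 2 + u ^ (2 * m)) = u"
  unfolding u_of_def
proof (rule the_equality)
  show "u > 0 \<and> u ^ 2 + u ^ (2 * m) = u ^ 2 + u ^ (2 * m)" using u by simp
next
  fix v :: real
  assume v: "v > 0 \<and> v ^ 2 + v ^ (2 * m) = u ^ 2 + u ^ (2 * m)"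
  have m2: "2 * m \<noteq> 0" using m by simp
  show "v = u"
  proof (rule linorder_cases[of v u])
    assume "v < u"
    then have "v ^ 2 < u ^ 2" "v ^ (2*m) < u ^ (2*m)"
      using v m2 by (auto intro: power_strict_mono)
    then show ?thesis using v by simp
  next
    assume "u < v"
    then have "u ^ 2 < v ^ 2" "u ^ (2*m) < v ^ (2*m)"
      using u m2 by (auto intro: power_strict_mono)
    then show ?thesis using v by simp
  qed
qed

lemma sc_theta:
  assumes m: "m \<ge> 1" and u: "u > 0"
  shows "sqrt (u ^ 2 + u ^ (2 * m)) * sin (theta0 m (u ^ 2 + u ^ (2 * m))) = u
       \<and> sqrt (u ^ 2 + u ^ (2 * m)) * cos (theta0 m (u ^ 2 + u ^ (2 * m))) = u ^ m"
proof -
  define h where "h = u ^ 2 + u ^ (2 * m)"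
  define t where "t = u / u ^ m"
  have um: "u ^ m > 0" using u by simp
  have th: "theta0 m h = arctan t" unfolding theta0_def t_def h_def using u_of_eq[OF m u] by simp
  have "1 + t ^ 2 = h / (u ^ m) ^ 2"
    unfolding t_def h_def using um u by (simp add: power_mult power_divide mult.commute add_divide_distrib)
  then have q: "sqrt (1 + t ^ 2) = sqrt h / u ^ m"
    using um by (simp add: real_sqrt_divide)
  have hp: "sqrt h > 0" unfolding h_def using u by (simp add: add_pos_nonneg)
  have "sqrt h * sin (theta0 m h) = u"
    unfolding th sin_arctan q using hp um by (simp add: t_def field_simps)
  moreover have "sqrt h * cos (theta0 m h) = u ^ m"
    unfolding th cos_arctan q using hp um by (simp add: field_simps)
  ultimately show ?thesis unfolding h_def by simp
qed

definition Vs :: "nat \<Rightarrow> nat \<Rightarrow> (real \<Rightarrow> real) set" where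
  "Vs m n = {g. \<exists>cA cB cC. \<forall>u>0. g u = comb m n cA cB cC u}"

lemma Vs_zero: "(\<lambda>u. 0) \<in> Vs m n"
  unfolding Vs_def
  by (rule CollectI, rule exI[of _ "\<lambda>_. 0"], rule exI[of _ "\<lambda>_ _. 0"], rule exI[of _ "\<lambda>_. 0"])
     (simp add: comb_def)

lemma Vs_add:
  assumes "f \<in> Vs m n" "g \<in> Vs m n"
  shows "(\<lambda>u. f u + g u) \<in> Vs m n"
proof -
  obtain a1 b1 c1 where 1: "\<forall>u>0. f u = comb m n a1 b1 c1 u" using assms(1) unfolding Vs_def by blast
  obtain a2 b2 c2 where 2: "\<forall>u>0. g u = comb m n a2 b2 c2 u" using assms(2) unfolding Vs_def by blast
  have "\<forall>u>0. f u + g u = comb m n (\<lambda>p. a1 p + a2 p) (\<lambda>p k. b1 p k + b2 p k) (\<lambda>l. c1 l + c2 l) u"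
    using 1 2 by (simp add: comb_def sum.distrib algebra_simps)
  then show ?thesis unfolding Vs_def by blast
qed

lemma Vs_scale:
  assumes "f \<in> Vs m n"
  shows "(\<lambda>u. c * f u) \<in> Vs m n"
proof -
  obtain a1 b1 c1 where 1: "\<forall>u>0. f u = comb m n a1 b1 c1 u" using assms(1) unfolding Vs_def by blast
  have "\<forall>u>0. c * f u = comb m n (\<lambda>p. c * a1 p) (\<lambda>p k. c * b1 p k) (\<lambda>l. c * c1 l) u"
    using 1 by (simp add: comb_def sum_distrib_left algebra_simps)
  then show ?thesis unfolding Vs_def by blast
qed

lemma Vs_cong:
  assumes "f \<in> Vs m n" "\<And>u. u > 0 \<Longrightarrow> g u = f u"
  shows "g \<in> Vs m n"
  using assms unfolding Vs_def by auto

lemma Vs_sum: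
  assumes "finite A" "\<And>x. x \<in> A \<Longrightarrow> f x \<in> Vs m n"
  shows "(\<lambda>u. \<Sum>x\<in>A. f x u) \<in> Vs m n"
  using assms
proof (induction A rule: finite_induct)
  case empty then show ?case using Vs_zero by simp
next
  case (insert x F)
  then show ?case using Vs_add[of "f x" m n "\<lambda>u. \<Sum>x\<in>F. f x u"] by simp
qed

lemma sum_ind:
  assumes "finite A"
  shows "(\<Sum>q\<in>A. (if q = p then 1 else 0) * (f q :: real)) = (if p \<in> A then f p else 0)"
proof -
  have "(\<Sum>q\<in>A. (if q = p then 1 else 0) * f q) = (\<Sum>q\<in>A. if q = p then f q else 0)"
    by (rule sum.cong) auto
  then show ?thesis using assms by simp
qed

lemma Vs_A:
  assumes "p \<le> n div 2"
  shows "(\<lambda>u. u ^ (2 * p + 1)) \<in> Vs m n"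
proof -
  have "\<forall>u>0. u ^ (2 * p + 1) = comb m n (\<lambda>q. if q = p then 1 else 0) (\<lambda>_ _. 0) (\<lambda>_. 0) u"
    using assms unfolding comb_def sum_ind[OF finite_atMost] by simp
  then show ?thesis unfolding Vs_def by blast
qed

lemma Vs_B:
  assumes "p \<le> n div 2" "k \<le> 2 * p"
  shows "(\<lambda>u. u ^ (2 * p + (m - 1) * (k + 1) + 1)) \<in> Vs m n"
proof -
  have "\<forall>u>0. u ^ (2 * p + (m - 1) * (k + 1) + 1) =
     comb m n (\<lambda>_. 0) (\<lambda>q j. if q = p \<and> j = k then 1 else 0) (\<lambda>_. 0) u"
  proof (intro allI impI)
    fix u :: real
    have "(\<Sum>q\<le>n div 2. \<Sum>j\<le>2 * q. (if q = p \<and> j = k then 1 else 0) * u ^ (2 * q + (m - 1) * (j + 1) + 1))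
       = (\<Sum>q\<le>n div 2. if q = p then u ^ (2 * q + (m - 1) * (k + 1) + 1) else 0)"
    proof (rule sum.cong)
      fix q assume "q \<in> {..n div 2}"
      show "(\<Sum>j\<le>2 * q. (if q = p \<and> j = k then 1 else 0) * u ^ (2 * q + (m - 1) * (j + 1) + 1))
         = (if q = p then u ^ (2 * q + (m - 1) * (k + 1) + 1) else 0)"
      proof (cases "q = p")
        case True
        then show ?thesis using sum_ind[OF finite_atMost, where p=k and f="\<lambda>j. u ^ (2 * q + (m - 1) * (j + 1) + 1)"] assms
          by simp
      qed simp
    qed simp
    also have "\<dots> = u ^ (2 * p + (m - 1) * (k + 1) + 1)" using assms by simp
    finally have e: "(\<Sum>q\<le>n div 2. \<Sum>j\<le>2 * q. (if q = p \<and> j = k then 1 else 0) * u ^ (2 * q + (m - 1) * (j + 1) + 1)) = u ^ (2 * p + (m - 1) * (k + 1) + 1)" .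
    show "u ^ (2 * p + (m - 1) * (k + 1) + 1) =
     comb m n (\<lambda>_. 0) (\<lambda>q j. if q = p \<and> j = k then 1 else 0) (\<lambda>_. 0) u"
      unfolding comb_def e by simp
  qed
  then show ?thesis unfolding Vs_def by blast
qed

lemma Vs_C:
  assumes "l \<in> Lset n"
  shows "(\<lambda>u. (u ^ 2 + u ^ (2 * m)) ^ (l + 1)) \<in> Vs m n"
proof -
  have fin: "finite (Lset n)"
  proof (rule finite_subset)
    show "Lset n \<subseteq> {..n}" unfolding Lset_def
    proof
      fix l assume "l \<in> {l. int l \<le> \<lfloor>(real n - 1) / 2\<rfloor>}"
      then have "int l \<le> \<lfloor>(real n - 1) / 2\<rfloor>" by simp
      then have "real l \<le> (real n - 1) / 2" by linarith
      then show "l \<in> {..n}" by simp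
    qed
  qed simp
  have "\<forall>u>0. (u ^ 2 + u ^ (2 * m)) ^ (l + 1) = comb m n (\<lambda>_. 0) (\<lambda>_ _. 0) (\<lambda>q. if q = l then 1 else 0) u"
    using assms fin unfolding comb_def sum_ind[OF fin] by simp
  then show ?thesis unfolding Vs_def by blast
qed

lemma mono_V:
  assumes "i + j = d" "odd d" "d \<le> n + 1" "m \<ge> 1"
  shows "(\<lambda>u. u ^ (i + m * j)) \<in> Vs m n"
proof -
  obtain p where p: "d = 2 * p + 1" using assms(2) oddE by blast
  have pn: "p \<le> n div 2" using p assms(3) by linarith
  obtain m' where m': "m = Suc m'" using assms(4) not0_implies_Suc by fastforce
  show ?thesis
  proof (cases j)
    case 0
    then have "i = 2 * p + 1" using assms(1) p by simp
    then show ?thesis using Vs_A[OF pn, of m] 0 by simp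
  next
    case (Suc k)
    have k: "k \<le> 2 * p" using Suc assms(1) p by simp
    have "i + m * j = 2 * p + (m - 1) * (k + 1) + 1" using Suc assms(1) p m' by (simp add: algebra_simps)
    then show ?thesis using Vs_B[OF pn k, of m] by simp
  qed
qed

lemma Hom_V:
  assumes "F \<in> Hom d" "odd d" "d \<le> n + 1" "m \<ge> 1"
  shows "(\<lambda>u. sqrt (u ^ 2 + u ^ (2 * m)) ^ d * F (theta0 m (u ^ 2 + u ^ (2 * m)))) \<in> Vs m n"
  using assms(1)
proof induction
  case Hzero
  then show ?case using Vs_zero by simp
next
  case (Hmono i j)
  show ?case
  proof (rule Vs_cong[OF mono_V[OF Hmono[symmetric] assms(2-4)]])
    fix u :: real assume u: "u > 0"
    note sc = sc_theta[OF assms(4) u]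
    have "sqrt (u ^ 2 + u ^ (2 * m)) ^ d * (sin (theta0 m (u ^ 2 + u ^ (2 * m))) ^ i * cos (theta0 m (u ^ 2 + u ^ (2 * m))) ^ j)
      = (sqrt (u ^ 2 + u ^ (2 * m)) * sin (theta0 m (u ^ 2 + u ^ (2 * m)))) ^ i *
        (sqrt (u ^ 2 + u ^ (2 * m)) * cos (theta0 m (u ^ 2 + u ^ (2 * m)))) ^ j"
      unfolding Hmono by (simp add: power_mult_distrib power_add)
    also have "\<dots> = u ^ (i + m * j)" using sc by (simp add: power_add power_mult)
    finally show "sqrt (u ^ 2 + u ^ (2 * m)) ^ d * (sin (theta0 m (u ^ 2 + u ^ (2 * m))) ^ i * cos (theta0 m (u ^ 2 + u ^ (2 * m))) ^ j)
      = u ^ (i + m * j)" .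
  qed
next
  case (Hadd f g)
  then show ?case using Vs_add[OF Hadd.IH] by (simp add: distrib_left)
next
  case (Hscale f c)
  then show ?case using Vs_scale[OF Hscale.IH, of c] by (simp add: algebra_simps)
qed

lemma Lset_mem:
  assumes "2 * l + 2 \<le> n + 1"
  shows "l \<in> Lset n"
proof -
  have "real (2 * l + 2) \<le> real (n + 1)" using assms by (simp only: of_nat_le_iff)
  then have "real l \<le> (real n - 1) / 2" by simp
  then have "int l \<le> \<lfloor>(real n - 1) / 2\<rfloor>" by (simp add: le_floor_iff)
  then show ?thesis unfolding Lset_def by simp
qed

lemma K:
  assumes "d = a + b" "1 \<le> d" "d \<le> n + 1" "m \<ge> 1"
  shows "(\<lambda>u. sqrt (u ^ 2 + u ^ (2 * m)) ^ d * Ep m (u ^ 2 + u ^ (2 * m)) a b) \<in> Vs m n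
       \<and> (\<lambda>u. sqrt (u ^ 2 + u ^ (2 * m)) ^ d * Em m (u ^ 2 + u ^ (2 * m)) a b) \<in> Vs m n"
proof (cases "odd d")
  case True
  then obtain F where F: "F \<in> Hom (a+b)" and I: "\<And>\<alpha>. integral {\<alpha>-pi..\<alpha>} (\<lambda>t. sin t ^ a * cos t ^ b) = 2 * F \<alpha>
     \<and> integral {\<alpha>..\<alpha>+pi} (\<lambda>t. sin t ^ a * cos t ^ b) = - 2 * F \<alpha>"
    using E_odd[of a b] assms(1) by blast
  have I1: "integral {\<alpha>-pi..\<alpha>} (\<lambda>t. sin t ^ a * cos t ^ b) = 2 * F \<alpha>"
   and I2: "integral {\<alpha>..\<alpha>+pi} (\<lambda>t. sin t ^ a * cos t ^ b) = - 2 * F \<alpha>" for \<alpha> using I by auto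
  have HV: "(\<lambda>u. sqrt (u ^ 2 + u ^ (2 * m)) ^ d * F (theta0 m (u ^ 2 + u ^ (2 * m)))) \<in> Vs m n"
    using Hom_V[OF _ True assms(3,4)] F assms(1) by simp
  show ?thesis
  proof
    show "(\<lambda>u. sqrt (u ^ 2 + u ^ (2 * m)) ^ d * Ep m (u ^ 2 + u ^ (2 * m)) a b) \<in> Vs m n"
      using Vs_scale[OF HV, of 2] unfolding Ep_def I1 by (simp add: algebra_simps)
    show "(\<lambda>u. sqrt (u ^ 2 + u ^ (2 * m)) ^ d * Em m (u ^ 2 + u ^ (2 * m)) a b) \<in> Vs m n"
      using Vs_scale[OF HV, of "-2"] unfolding Em_def I2 by (simp add: algebra_simps)
  qed
next
  case False
  then obtain c where I: "\<And>\<alpha>. integral {\<alpha>-pi..\<alpha>} (\<lambda>t. sin t ^ a * cos t ^ b) = c * pi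
     \<and> integral {\<alpha>..\<alpha>+pi} (\<lambda>t. sin t ^ a * cos t ^ b) = c * pi"
    using E_even[of a b] assms(1) by blast
  have I1: "integral {\<alpha>-pi..\<alpha>} (\<lambda>t. sin t ^ a * cos t ^ b) = c * pi"
   and I2: "integral {\<alpha>..\<alpha>+pi} (\<lambda>t. sin t ^ a * cos t ^ b) = c * pi" for \<alpha> using I by auto
  obtain q where q: "d = 2 * q" using False by (auto elim: evenE)
  define l where "l = q - 1"
  have l: "d = 2 * l + 2" using q assms(2) unfolding l_def by simp
  have lL: "l \<in> Lset n" using l assms(3) by (intro Lset_mem) simp
  have rd: "sqrt (u ^ 2 + u ^ (2 * m)) ^ d = (u ^ 2 + u ^ (2 * m)) ^ (l + 1)" for u :: real
  proof -
    have nn: "u ^ 2 + u ^ (2 * m) \<ge> 0" by (simp add: power_mult add_nonneg_nonneg)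
    have "sqrt (u ^ 2 + u ^ (2 * m)) ^ d = (sqrt (u ^ 2 + u ^ (2 * m)) ^ 2) ^ (l + 1)"
    proof -
      have e: "2 * l + 2 = 2 * (l + 1)" by simp
      show ?thesis unfolding l e by (rule power_mult)
    qed
    then show ?thesis using nn by simp
  qed
  have CV: "(\<lambda>u. c * pi * (u ^ 2 + u ^ (2 * m)) ^ (l + 1)) \<in> Vs m n"
    using Vs_scale[OF Vs_C[OF lL], of "c * pi"] by simp
  show ?thesis unfolding Ep_def Em_def I1 I2 rd using CV by (simp add: algebra_simps)
qed

lemma part1:
  assumes m: "m \<ge> 1"
  shows "(\<lambda>u. melnikov m n ap bp am bm (u ^ 2 + u ^ (2 * m))) \<in> Vs m n"
proof -
  define T where "T i j u = sqrt (u ^ 2 + u ^ (2 * m)) ^ (i+j+1) *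
      (bp i j * Ep m (u ^ 2 + u ^ (2 * m)) i (j+1) + ap i j * Ep m (u ^ 2 + u ^ (2 * m)) (i+1) j
     + bm i j * Em m (u ^ 2 + u ^ (2 * m)) i (j+1) + am i j * Em m (u ^ 2 + u ^ (2 * m)) (i+1) j)" for i j u
  have e: "(\<lambda>u. melnikov m n ap bp am bm (u ^ 2 + u ^ (2 * m))) = (\<lambda>u. \<Sum>i\<le>n. \<Sum>j\<le>n-i. T i j u)"
    by (rule ext) (simp add: melnikov_expand T_def)
  have TV: "(\<lambda>u. T i j u) \<in> Vs m n" if ij: "i \<le> n" "j \<le> n - i" for i j
  proof -
    have d1: "i + j + 1 = i + (j + 1)" "1 \<le> i + j + 1" "i + j + 1 \<le> n + 1" using ij by auto
    have d2: "i + j + 1 = (i + 1) + j" by simp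
    note K1 = K[OF d1 m] and K2 = K[OF d2 d1(2,3) m]
    have eT: "(\<lambda>u. T i j u) = (\<lambda>u. bp i j * (sqrt (u ^ 2 + u ^ (2 * m)) ^ (i+j+1) * Ep m (u ^ 2 + u ^ (2 * m)) i (j+1))
       + ap i j * (sqrt (u ^ 2 + u ^ (2 * m)) ^ (i+j+1) * Ep m (u ^ 2 + u ^ (2 * m)) (i+1) j)
       + bm i j * (sqrt (u ^ 2 + u ^ (2 * m)) ^ (i+j+1) * Em m (u ^ 2 + u ^ (2 * m)) i (j+1))
       + am i j * (sqrt (u ^ 2 + u ^ (2 * m)) ^ (i+j+1) * Em m (u ^ 2 + u ^ (2 * m)) (i+1) j))"
      by (rule ext) (simp add: T_def algebra_simps)
    show ?thesis unfolding eT using K1 K2 by (intro Vs_add Vs_scale) auto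
  qed
  have "(\<lambda>u. \<Sum>j\<le>n-i. T i j u) \<in> Vs m n" if "i \<le> n" for i
    by (rule Vs_sum) (use TV that in auto)
  then have "(\<lambda>u. \<Sum>i\<le>n. \<Sum>j\<le>n-i. T i j u) \<in> Vs m n"
    by (intro Vs_sum[where f = "\<lambda>i u. \<Sum>j\<le>n-i. T i j u", simplified]) auto
  then show ?thesis unfolding e .
qed

definition Img :: "nat \<Rightarrow> nat \<Rightarrow> (real \<Rightarrow> real) set" where
  "Img m n = {g. \<exists>ap bp am bm. \<forall>u>0. melnikov m n ap bp am bm (u ^ 2 + u ^ (2 * m)) = g u}"

lemma Img_zero: "(\<lambda>u. 0) \<in> Img m n"
proof -
  have "\<forall>u>0. melnikov m n (\<lambda>_ _. 0) (\<lambda>_ _. 0) (\<lambda>_ _. 0) (\<lambda>_ _. 0) (u ^ 2 + u ^ (2 * m)) = 0"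
    by (simp add: melnikov_expand)
  then show ?thesis unfolding Img_def by blast
qed

lemma Img_add:
  assumes "f \<in> Img m n" "g \<in> Img m n"
  shows "(\<lambda>u. f u + g u) \<in> Img m n"
proof -
  obtain a1 b1 c1 d1 where 1: "\<forall>u>0. melnikov m n a1 b1 c1 d1 (u ^ 2 + u ^ (2 * m)) = f u"
    using assms(1) unfolding Img_def by blast
  obtain a2 b2 c2 d2 where 2: "\<forall>u>0. melnikov m n a2 b2 c2 d2 (u ^ 2 + u ^ (2 * m)) = g u"
    using assms(2) unfolding Img_def by blast
  have "melnikov m n (\<lambda>i j. a1 i j + a2 i j) (\<lambda>i j. b1 i j + b2 i j) (\<lambda>i j. c1 i j + c2 i j) (\<lambda>i j. d1 i j + d2 i j) h
    = melnikov m n a1 b1 c1 d1 h + melnikov m n a2 b2 c2 d2 h" for h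
    unfolding melnikov_expand by (simp add: sum.distrib[symmetric] algebra_simps)
  then have "\<forall>u>0. melnikov m n (\<lambda>i j. a1 i j + a2 i j) (\<lambda>i j. b1 i j + b2 i j) (\<lambda>i j. c1 i j + c2 i j) (\<lambda>i j. d1 i j + d2 i j) (u ^ 2 + u ^ (2 * m)) = f u + g u"
    using 1 2 by simp
  then show ?thesis unfolding Img_def by blast
qed

lemma Img_scale:
  assumes "f \<in> Img m n"
  shows "(\<lambda>u. c * f u) \<in> Img m n"
proof -
  obtain a1 b1 c1 d1 where 1: "\<forall>u>0. melnikov m n a1 b1 c1 d1 (u ^ 2 + u ^ (2 * m)) = f u"
    using assms(1) unfolding Img_def by blast
  have "melnikov m n (\<lambda>i j. c * a1 i j) (\<lambda>i j. c * b1 i j) (\<lambda>i j. c * c1 i j) (\<lambda>i j. c * d1 i j) h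
    = c * melnikov m n a1 b1 c1 d1 h" for h
    unfolding melnikov_expand by (simp add: sum_distrib_left algebra_simps)
  then have "\<forall>u>0. melnikov m n (\<lambda>i j. c * a1 i j) (\<lambda>i j. c * b1 i j) (\<lambda>i j. c * c1 i j) (\<lambda>i j. c * d1 i j) (u ^ 2 + u ^ (2 * m)) = c * f u"
    using 1 by simp
  then show ?thesis unfolding Img_def by blast
qed

lemma Img_cong:
  assumes "f \<in> Img m n" "\<And>u. u > 0 \<Longrightarrow> g u = f u"
  shows "g \<in> Img m n"
  using assms unfolding Img_def by auto

lemma Img_sum:
  assumes "finite A" "\<And>x. x \<in> A \<Longrightarrow> f x \<in> Img m n"
  shows "(\<lambda>u. \<Sum>x\<in>A. f x u) \<in> Img m n"
  using assms
proof (induction A rule: finite_induct)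
  case empty then show ?case using Img_zero by simp
next
  case (insert x F)
  then show ?case using Img_add[of "f x" m n "\<lambda>u. \<Sum>x\<in>F. f x u"] by simp
qed

lemma sum2_delta:
  "(\<Sum>i\<le>(n::nat). \<Sum>j\<le>n-i. if i = i0 \<and> j = j0 then f i j else 0) = (if i0 + j0 \<le> n then f i0 j0 else (0::real))"
proof -
  have "(\<Sum>i\<le>n. \<Sum>j\<le>n-i. if i = i0 \<and> j = j0 then f i j else 0)
     = (\<Sum>i\<le>n. if i = i0 then (if j0 \<le> n - i0 then f i0 j0 else 0) else 0)"
  proof (rule sum.cong)
    fix i assume "i \<in> {..n}"
    show "(\<Sum>j\<le>n-i. if i = i0 \<and> j = j0 then f i j else 0) = (if i = i0 then (if j0 \<le> n - i0 then f i0 j0 else 0) else 0)"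
    proof (cases "i = i0")
      case True
      have "(\<Sum>j\<le>n-i. if i = i0 \<and> j = j0 then f i j else 0) = (\<Sum>j\<le>n-i. if j = j0 then f i j else 0)"
        using True by simp
      then show ?thesis using True by (simp add: sum.delta)
    qed simp
  qed simp
  also have "\<dots> = (if i0 + j0 \<le> n then f i0 j0 else 0)" by (auto simp: sum.delta)
  finally show ?thesis .
qed

lemma deriv_pow_sc:
  "((\<lambda>t. sin t ^ a * cos t ^ b) has_real_derivative
     (real a * (sin t ^ (a - 1) * cos t ^ (b + 1)) - real b * (sin t ^ (a + 1) * cos t ^ (b - 1)))) (at t)"
proof -
  have e: "real a * s ^ (a - Suc 0) * c * c ^ b + s ^ a * (real b * c ^ (b - Suc 0) * - s)
     = real a * (s ^ (a - 1) * c ^ (b + 1)) - real b * (s ^ (a + 1) * c ^ (b - 1))" for s c :: real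
    by (simp add: algebra_simps)
  show ?thesis by (rule derivative_eq_intros refl)+ (simp add: e[symmetric] algebra_simps)
qed

lemma exact_int:
  assumes "\<alpha> \<le> \<beta>"
  shows "real a * integral {\<alpha>..\<beta>} (\<lambda>t. sin t ^ (a - 1) * cos t ^ (b + 1))
       - real b * integral {\<alpha>..\<beta>} (\<lambda>t. sin t ^ (a + 1) * cos t ^ (b - 1))
       = sin \<beta> ^ a * cos \<beta> ^ b - sin \<alpha> ^ a * cos \<alpha> ^ b"
proof -
  have "((\<lambda>t. real a * (sin t ^ (a - 1) * cos t ^ (b + 1)) - real b * (sin t ^ (a + 1) * cos t ^ (b - 1)))
     has_integral (sin \<beta> ^ a * cos \<beta> ^ b - sin \<alpha> ^ a * cos \<alpha> ^ b)) {\<alpha>..\<beta>}"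
    by (rule fundamental_theorem_of_calculus[OF assms, where f = "\<lambda>t. sin t ^ a * cos t ^ b"])
       (rule has_field_derivative_at_within[OF deriv_pow_sc, unfolded has_real_derivative_iff_has_vector_derivative])
  moreover have "((\<lambda>t. real a * (sin t ^ (a - 1) * cos t ^ (b + 1)) - real b * (sin t ^ (a + 1) * cos t ^ (b - 1)))
     has_integral (real a * integral {\<alpha>..\<beta>} (\<lambda>t. sin t ^ (a - 1) * cos t ^ (b + 1))
       - real b * integral {\<alpha>..\<beta>} (\<lambda>t. sin t ^ (a + 1) * cos t ^ (b - 1)))) {\<alpha>..\<beta>}"
    by (intro has_integral_diff has_integral_mult_right integrable_integral integrable_continuous_real continuous_intros)
  ultimately show ?thesis using has_integral_unique by blast
qed

lemma Img_exact:
  assumes odd: "odd (a + b)" and d: "a + b \<le> n + 1" and m: "m \<ge> 1"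
  shows "(\<lambda>u. u ^ (a + m * b)) \<in> Img m n"
proof -
  define bp where "bp = (\<lambda>i j. if i = a - 1 \<and> j = b then real a / 2 else 0)"
  define ap where "ap = (\<lambda>i j. if i = a \<and> j = b - 1 then - (real b / 2) else 0)"
  have main: "melnikov m n ap bp (\<lambda>_ _. 0) (\<lambda>_ _. 0) h
     = sqrt h ^ (a + b) * (real a * Ep m h (a - 1) (b + 1) - real b * Ep m h (a + 1) (b - 1)) / 2" for h
  proof -
    have "melnikov m n ap bp (\<lambda>_ _. 0) (\<lambda>_ _. 0) h
      = (\<Sum>i\<le>n. \<Sum>j\<le>n-i. if i = a - 1 \<and> j = b then sqrt h ^ (i+j+1) * (real a / 2) * Ep m h i (j+1) else 0)
      + (\<Sum>i\<le>n. \<Sum>j\<le>n-i. if i = a \<and> j = b - 1 then sqrt h ^ (i+j+1) * (- (real b / 2)) * Ep m h (i+1) j else 0)"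
      unfolding melnikov_expand sum.distrib[symmetric]
      by (intro sum.cong refl) (simp add: ap_def bp_def algebra_simps)
    also have "\<dots> = (if a - 1 + b \<le> n then sqrt h ^ (a - 1 + b + 1) * (real a / 2) * Ep m h (a - 1) (b + 1) else 0)
        + (if a + (b - 1) \<le> n then sqrt h ^ (a + (b - 1) + 1) * (- (real b / 2)) * Ep m h (a + 1) (b - 1) else 0)"
      unfolding sum2_delta ..
    also have "\<dots> = sqrt h ^ (a + b) * (real a * Ep m h (a - 1) (b + 1) - real b * Ep m h (a + 1) (b - 1)) / 2"
    proof (cases "a = 0")
      case True
      then have f: "a + (b - 1) \<le> n" "a + (b - 1) + 1 = a + b" using odd d by (cases b; auto)+
      show ?thesis unfolding f(2) using f(1) True by (simp add: algebra_simps)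
    next
      case a: False
      show ?thesis
      proof (cases "b = 0")
        case True
        then have f: "a - 1 + b \<le> n" "a - 1 + b + 1 = a + b" using a d by auto
        show ?thesis unfolding f(2) using f(1) True by (simp add: algebra_simps)
      next
        case False
        then have f: "a - 1 + b \<le> n" "a - 1 + b + 1 = a + b" "a + (b - 1) \<le> n" "a + (b - 1) + 1 = a + b"
          using a d by auto
        show ?thesis unfolding f(2,4) using f(1,3) by (simp add: algebra_simps)
      qed
    qed
    finally show ?thesis .
  qed
  show ?thesis
  proof (rule Img_cong)
    show "(\<lambda>u. melnikov m n ap bp (\<lambda>_ _. 0) (\<lambda>_ _. 0) (u ^ 2 + u ^ (2 * m))) \<in> Img m n"
      unfolding Img_def by blast
  next
    fix u :: real assume u: "u > 0"
    define h where "h = u ^ 2 + u ^ (2 * m)"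
    define \<theta> where "\<theta> = theta0 m h"
    have sc: "sqrt h * sin \<theta> = u" "sqrt h * cos \<theta> = u ^ m"
      using sc_theta[OF m u] unfolding h_def \<theta>_def by auto
    have ex: "real a * Ep m h (a - 1) (b + 1) - real b * Ep m h (a + 1) (b - 1)
        = sin \<theta> ^ a * cos \<theta> ^ b - sin (\<theta> - pi) ^ a * cos (\<theta> - pi) ^ b"
      unfolding Ep_def \<theta>_def[symmetric] by (rule exact_int) simp
    have neg: "(- sin \<theta>) ^ a * (- cos \<theta>) ^ b = - (sin \<theta> ^ a * cos \<theta> ^ b)"
    proof -
      have "(- sin \<theta>) ^ a * (- cos \<theta>) ^ b = (-1) ^ (a + b) * (sin \<theta> ^ a * cos \<theta> ^ b)"
        by (simp only: power_minus[of "sin \<theta>"] power_minus[of "cos \<theta>"] power_add mult_ac)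
      then show ?thesis using odd by simp
    qed
    have "melnikov m n ap bp (\<lambda>_ _. 0) (\<lambda>_ _. 0) h = sqrt h ^ (a + b) * (sin \<theta> ^ a * cos \<theta> ^ b)"
      unfolding main ex using neg by simp
    also have "\<dots> = (sqrt h * sin \<theta>) ^ a * (sqrt h * cos \<theta>) ^ b"
      by (simp add: power_mult_distrib power_add)
    also have "\<dots> = u ^ (a + m * b)" unfolding sc by (simp add: power_add power_mult)
    finally show "u ^ (a + m * b) = melnikov m n ap bp (\<lambda>_ _. 0) (\<lambda>_ _. 0) (u ^ 2 + u ^ (2 * m))"
      unfolding h_def by simp
  qed
qed

lemma Img_C:
  assumes l: "l \<in> Lset n" and m: "m \<ge> 1"
  shows "(\<lambda>u. (u ^ 2 + u ^ (2 * m)) ^ (l + 1)) \<in> Img m n"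
proof -
  have "int l \<le> \<lfloor>(real n - 1) / 2\<rfloor>" using l unfolding Lset_def by simp
  then have "real l \<le> (real n - 1) / 2" by (simp add: le_floor_iff)
  then have "real (2 * l + 1) \<le> real n" by simp
  then have ln: "2 * l + 1 \<le> n" by (simp only: of_nat_le_iff)
  obtain c where cp: "c > 0" and I: "\<And>\<alpha>. integral {\<alpha>-pi..\<alpha>} (\<lambda>t. sin t ^ (2*l+2) * cos t ^ 0) = c * pi
     \<and> integral {\<alpha>..\<alpha>+pi} (\<lambda>t. sin t ^ (2*l+2) * cos t ^ 0) = c * pi"
    using E_even[of "2*l+2" 0] by auto
  define \<kappa> where "\<kappa> = 1 / (2 * c * pi)"
  define ap where "ap = (\<lambda>i (j::nat). if i = 2 * l + 1 \<and> j = 0 then \<kappa> else 0)"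
  have main: "melnikov m n ap (\<lambda>_ _. 0) ap (\<lambda>_ _. 0) h = sqrt h ^ (2 * l + 2)" for h
  proof -
    have "melnikov m n ap (\<lambda>_ _. 0) ap (\<lambda>_ _. 0) h
      = (\<Sum>i\<le>n. \<Sum>j\<le>n-i. if i = 2 * l + 1 \<and> j = 0 then sqrt h ^ (i+j+1) * \<kappa> * (Ep m h (i+1) j + Em m h (i+1) j) else 0)"
      unfolding melnikov_expand
      by (intro sum.cong refl) (simp add: ap_def algebra_simps)
    also have "\<dots> = sqrt h ^ (2 * l + 2) * \<kappa> * (Ep m h (2 * l + 2) 0 + Em m h (2 * l + 2) 0)"
      unfolding sum2_delta using ln by (simp add: numeral_2_eq_2)
    also have "\<dots> = sqrt h ^ (2 * l + 2) * \<kappa> * (2 * c * pi)"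
      unfolding Ep_def Em_def using I[of "theta0 m h"] by simp
    also have "\<dots> = sqrt h ^ (2 * l + 2)" unfolding \<kappa>_def using cp by simp
    finally show ?thesis .
  qed
  show ?thesis
  proof (rule Img_cong)
    show "(\<lambda>u. melnikov m n ap (\<lambda>_ _. 0) ap (\<lambda>_ _. 0) (u ^ 2 + u ^ (2 * m))) \<in> Img m n"
      unfolding Img_def by blast
  next
    fix u :: real assume u: "u > 0"
    have nn: "u ^ 2 + u ^ (2 * m) \<ge> 0" by (simp add: power_mult add_nonneg_nonneg)
    have e: "2 * l + 2 = 2 * (l + 1)" by simp
    have "sqrt (u ^ 2 + u ^ (2 * m)) ^ (2 * l + 2) = (sqrt (u ^ 2 + u ^ (2 * m)) ^ 2) ^ (l + 1)"
      unfolding e by (rule power_mult)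
    also have "\<dots> = (u ^ 2 + u ^ (2 * m)) ^ (l + 1)" using nn by simp
    finally show "(u ^ 2 + u ^ (2 * m)) ^ (l + 1) = melnikov m n ap (\<lambda>_ _. 0) ap (\<lambda>_ _. 0) (u ^ 2 + u ^ (2 * m))"
      unfolding main by simp
  qed
qed

lemma Lset_finite: "finite (Lset n)"
proof (rule finite_subset)
  show "Lset n \<subseteq> {..n}" unfolding Lset_def
  proof
    fix l assume "l \<in> {l. int l \<le> \<lfloor>(real n - 1) / 2\<rfloor>}"
    then have "int l \<le> \<lfloor>(real n - 1) / 2\<rfloor>" by simp
    then have "real l \<le> (real n - 1) / 2" by linarith
    then show "l \<in> {..n}" by simp
  qed
qed simp

lemma part3:
  assumes m: "m \<ge> 1"
  shows "(\<lambda>u. comb m n cA cB cC u) \<in> Img m n"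
proof -
  obtain m' where m': "m = Suc m'" using m not0_implies_Suc by fastforce
  have A: "(\<lambda>u. u ^ (2 * p + 1)) \<in> Img m n" if "p \<le> n div 2" for p
    using Img_exact[of "2 * p + 1" 0 n m] that m by simp
  have B: "(\<lambda>u. u ^ (2 * p + (m - 1) * (k + 1) + 1)) \<in> Img m n" if "p \<le> n div 2" "k \<le> 2 * p" for p k
  proof -
    have e: "2 * p - k + m * (k + 1) = 2 * p + (m - 1) * (k + 1) + 1" using that m' by (simp add: algebra_simps)
    have "(\<lambda>u. u ^ (2 * p - k + m * (k + 1))) \<in> Img m n"
      by (rule Img_exact) (use that m in \<open>auto\<close>)
    then show ?thesis unfolding e .
  qed
  have C: "(\<lambda>u. (u ^ 2 + u ^ (2 * m)) ^ (l + 1)) \<in> Img m n" if "l \<in> Lset n" for l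
    using Img_C[OF that m] .
  have "(\<lambda>u. (\<Sum>p\<le>n div 2. cA p * u ^ (2 * p + 1))
   + (\<Sum>p\<le>n div 2. \<Sum>k\<le>2 * p. cB p k * u ^ (2 * p + (m - 1) * (k + 1) + 1))
   + (\<Sum>l\<in>Lset n. cC l * (u ^ 2 + u ^ (2 * m)) ^ (l + 1))) \<in> Img m n"
  proof (intro Img_add)
    have "(\<lambda>u. \<Sum>p\<in>{..n div 2}. (\<lambda>p u. cA p * u ^ (2 * p + 1)) p u) \<in> Img m n"
      by (rule Img_sum, simp, rule Img_scale, rule A, simp)
    then show "(\<lambda>u. \<Sum>p\<le>n div 2. cA p * u ^ (2 * p + 1)) \<in> Img m n" by simp
  next
    have inner: "(\<lambda>u. \<Sum>k\<in>{..2 * p}. (\<lambda>k u. cB p k * u ^ (2 * p + (m - 1) * (k + 1) + 1)) k u) \<in> Img m n"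
      if "p \<le> n div 2" for p
      by (rule Img_sum, simp, rule Img_scale, rule B, use that in simp, simp)
    have "(\<lambda>u. \<Sum>p\<in>{..n div 2}. (\<lambda>p u. \<Sum>k\<le>2 * p. cB p k * u ^ (2 * p + (m - 1) * (k + 1) + 1)) p u) \<in> Img m n"
      by (rule Img_sum, simp, use inner in simp)
    then show "(\<lambda>u. \<Sum>p\<le>n div 2. \<Sum>k\<le>2 * p. cB p k * u ^ (2 * p + (m - 1) * (k + 1) + 1)) \<in> Img m n"
      by simp
  next
    have "(\<lambda>u. \<Sum>l\<in>Lset n. (\<lambda>l u. cC l * (u ^ 2 + u ^ (2 * m)) ^ (l + 1)) l u) \<in> Img m n"
      by (rule Img_sum, rule Lset_finite, rule Img_scale, rule C, simp)
    then show "(\<lambda>u. \<Sum>l\<in>Lset n. cC l * (u ^ 2 + u ^ (2 * m)) ^ (l + 1)) \<in> Img m n" by simp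
  qed
  then show ?thesis unfolding comb_def .
qed

lemma inj_exp:
  fixes M p p0 j j0 :: nat
  assumes "2 * p < M" "2 * p0 < M" "2 * p + M * (j + 1) = 2 * p0 + M * (j0 + 1)"
  shows "p = p0 \<and> j = j0"
proof -
  have "\<not> j < j0" if "2 * p < M" "2 * p0 < M" "2 * p + M * (j + 1) = 2 * p0 + M * (j0 + 1)" for p p0 j j0 :: nat
  proof
    assume "j < j0"
    then have "M * (j + 2) \<le> M * (j0 + 1)" by (intro mult_le_mono2) simp
    then have "M * (j + 1) + M \<le> M * (j0 + 1)" by (simp add: algebra_simps)
    then show False using that by linarith
  qed
  then have "j = j0" using assms by (metis linorder_neqE_nat)
  then show ?thesis using assms by simp
qed

lemma part2:
  assumes mk: "m = 2 * k + 1" and nm: "n < m - 1"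
    and z: "\<forall>u>0. comb m n cA cB cC u = 0"
  shows "(\<forall>p\<le>n div 2. cA p = 0) \<and> (\<forall>p\<le>n div 2. \<forall>j\<le>2 * p. cB p j = 0) \<and> (\<forall>l\<in>Lset n. cC l = 0)"
proof -
  define PO :: "real poly" where "PO = (\<Sum>p\<le>n div 2. monom (cA p) (2 * p + 1))
     + (\<Sum>p\<le>n div 2. \<Sum>j\<le>2 * p. monom (cB p j) (2 * p + (m - 1) * (j + 1) + 1))"
  define g :: "real poly" where "g = (\<Sum>l\<in>Lset n. monom (cC l) (l + 1))"
  define q :: "real poly" where "q = monom 1 2 + monom 1 (2 * m)"
  have pq: "poly q u = u ^ 2 + u ^ (2 * m)" for u unfolding q_def by (simp add: poly_monom)
  have pc: "comb m n cA cB cC u = poly PO u + poly (g \<circ>\<^sub>p q) u" for u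
    unfolding comb_def PO_def g_def poly_pcompose pq by (simp add: poly_sum poly_monom)
  have P0: "PO + g \<circ>\<^sub>p q = 0"
  proof (rule ccontr)
    assume ne: "PO + g \<circ>\<^sub>p q \<noteq> 0"
    have "{0<..} \<subseteq> {x. poly (PO + g \<circ>\<^sub>p q) x = 0}" using z pc by auto
    then have "finite ({0<..} :: real set)" using poly_roots_finite[OF ne] finite_subset by blast
    then show False using infinite_Ioi by blast
  qed
  then have all0: "poly PO u + poly (g \<circ>\<^sub>p q) u = 0" for u
    by (metis poly_0 poly_add)
  have oddPO: "poly PO (- u) = - poly PO u" for u
  proof -
    have o1: "odd (2 * p + (m - 1) * (j + 1) + 1)" for p j using mk by simp
    show ?thesis unfolding PO_def using o1
      by (simp add: poly_sum poly_monom sum_negf[symmetric] algebra_simps)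
  qed
  have evq: "poly q (- u) = poly q u" for u unfolding pq by (simp add: power_mult)
  have POz: "PO = 0"
  proof -
    have "poly PO u = 0" for u
      using all0[of u] all0[of "-u"] oddPO[of u] evq[of u] by (simp add: poly_pcompose)
    then show ?thesis using poly_all_0_iff_0 by blast
  qed
  have gz: "g = 0"
  proof (rule pcompose_eq_0)
    show "g \<circ>\<^sub>p q = 0" using P0 POz by simp
    have "coeff q 2 \<noteq> 0" unfolding q_def by (simp add: coeff_monom)
    then have "2 \<le> degree q" by (rule le_degree)
    then show "0 < degree q" by simp
  qed
  have M: "n < m - 1" by (rule nm)
  have A: "cA p0 = 0" if p0: "p0 \<le> n div 2" for p0
  proof -
    have "coeff PO (2 * p0 + 1) = cA p0"
    proof -
      have z2: "(\<Sum>p\<le>n div 2. \<Sum>j\<le>2 * p. (if 2 * p + (m - 1) * (j + 1) + 1 = 2 * p0 + 1 then cB p j else 0)) = 0"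
      proof (intro sum.neutral ballI)
        fix p j assume "p \<in> {..n div 2}" "j \<in> {..2 * p}"
        have "m - 1 \<le> (m - 1) * (j + 1)" by simp
        then have "2 * p + (m - 1) * (j + 1) + 1 \<noteq> 2 * p0 + 1" using p0 M by linarith
        then show "(if 2 * p + (m - 1) * (j + 1) + 1 = 2 * p0 + 1 then cB p j else 0) = 0" by simp
      qed
      have "coeff PO (2 * p0 + 1) = (\<Sum>p\<le>n div 2. if p = p0 then cA p else 0)
         + (\<Sum>p\<le>n div 2. \<Sum>j\<le>2 * p. (if 2 * p + (m - 1) * (j + 1) + 1 = 2 * p0 + 1 then cB p j else 0))"
        unfolding PO_def by (simp add: coeff_sum coeff_monom)
      then show ?thesis using z2 p0 by simp
    qed
    then show ?thesis using POz by simp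
  qed
  have B: "cB p0 j0 = 0" if p0: "p0 \<le> n div 2" and j0: "j0 \<le> 2 * p0" for p0 j0
  proof -
    let ?E = "2 * p0 + (m - 1) * (j0 + 1) + 1"
    have z1: "(\<Sum>p\<le>n div 2. if 2 * p + 1 = ?E then cA p else 0) = 0"
    proof (intro sum.neutral ballI)
      fix p assume p: "p \<in> {..n div 2}"
      have "m - 1 \<le> (m - 1) * (j0 + 1)" by simp
      then have "2 * p + 1 \<noteq> ?E" using p M by auto
      then show "(if 2 * p + 1 = ?E then cA p else 0) = 0" by simp
    qed
    have c2: "(\<Sum>p\<le>n div 2. \<Sum>j\<le>2 * p. (if 2 * p + (m - 1) * (j + 1) + 1 = ?E then cB p j else 0))
       = (\<Sum>p\<le>n div 2. if p = p0 then cB p j0 else 0)"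
    proof (rule sum.cong[OF refl])
      fix p assume p: "p \<in> {..n div 2}"
      have iff: "2 * p + (m - 1) * (j + 1) + 1 = ?E \<longleftrightarrow> p = p0 \<and> j = j0" for j
      proof
        assume "2 * p + (m - 1) * (j + 1) + 1 = ?E"
        then show "p = p0 \<and> j = j0" using inj_exp[of p "m - 1" p0 j j0] p p0 M by auto
      qed simp
      have "(\<Sum>j\<le>2 * p. (if 2 * p + (m - 1) * (j + 1) + 1 = ?E then cB p j else 0))
         = (\<Sum>j\<le>2 * p. (if p = p0 then (if j = j0 then cB p j else 0) else 0))"
        unfolding iff by (rule sum.cong) auto
      also have "\<dots> = (if p = p0 then cB p j0 else 0)" using j0 by auto
      finally show "(\<Sum>j\<le>2 * p. (if 2 * p + (m - 1) * (j + 1) + 1 = ?E then cB p j else 0))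
         = (if p = p0 then cB p j0 else 0)" .
    qed
    have "coeff PO ?E = (\<Sum>p\<le>n div 2. if 2 * p + 1 = ?E then cA p else 0)
       + (\<Sum>p\<le>n div 2. \<Sum>j\<le>2 * p. (if 2 * p + (m - 1) * (j + 1) + 1 = ?E then cB p j else 0))"
      unfolding PO_def by (simp add: coeff_sum coeff_monom del: add_left_cancel)
    then have "coeff PO ?E = cB p0 j0" using z1 c2 p0 by simp
    then show ?thesis using POz by simp
  qed
  have C: "cC l0 = 0" if l0: "l0 \<in> Lset n" for l0
  proof -
    have "coeff g (l0 + 1) = cC l0"
      unfolding g_def using l0 Lset_finite[of n] by (simp add: coeff_sum coeff_monom)
    then show ?thesis using gz by simp
  qed
  show ?thesis using A B C by blast
qed

theorem lemma3p5:
  fixes k m n :: nat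
  assumes "m = 2 * k + 1" and "n < m - 1"
  shows "(\<forall>ap bp am bm. \<exists>cA cB cC. \<forall>u>0.
            melnikov m n ap bp am bm (u ^ 2 + u ^ (2 * m)) = comb m n cA cB cC u)
       \<and> (\<forall>cA cB cC. (\<forall>u>0. comb m n cA cB cC u = 0) \<longrightarrow>
            (\<forall>p\<le>n div 2. cA p = 0) \<and> (\<forall>p\<le>n div 2. \<forall>j\<le>2 * p. cB p j = 0)
            \<and> (\<forall>l\<in>Lset n. cC l = 0))
       \<and> (\<forall>cA cB cC. \<exists>ap bp am bm. \<forall>u>0.
            melnikov m n ap bp am bm (u ^ 2 + u ^ (2 * m)) = comb m n cA cB cC u)"
proof -
  have m: "m \<ge> 1" using assms(1) by simp
  have 1: "\<forall>ap bp am bm. \<exists>cA cB cC. \<forall>u>0.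
            melnikov m n ap bp am bm (u ^ 2 + u ^ (2 * m)) = comb m n cA cB cC u"
  proof (intro allI)
    fix ap bp am bm
    show "\<exists>cA cB cC. \<forall>u>0. melnikov m n ap bp am bm (u ^ 2 + u ^ (2 * m)) = comb m n cA cB cC u"
      using part1[OF m, of n ap bp am bm] unfolding Vs_def by blast
  qed
  have 2: "\<forall>cA cB cC. (\<forall>u>0. comb m n cA cB cC u = 0) \<longrightarrow>
            (\<forall>p\<le>n div 2. cA p = 0) \<and> (\<forall>p\<le>n div 2. \<forall>j\<le>2 * p. cB p j = 0)
            \<and> (\<forall>l\<in>Lset n. cC l = 0)"
    using part2[OF assms] by blast
  have 3: "\<forall>cA cB cC. \<exists>ap bp am bm. \<forall>u>0.
            melnikov m n ap bp am bm (u ^ 2 + u ^ (2 * m)) = comb m n cA cB cC u"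
  proof (intro allI)
    fix cA cB cC
    show "\<exists>ap bp am bm. \<forall>u>0. melnikov m n ap bp am bm (u ^ 2 + u ^ (2 * m)) = comb m n cA cB cC u"
      using part3[OF m, of n cA cB cC] unfolding Img_def by blast
  qed
  show ?thesis using 1 2 3 by blast
qed

end
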